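(* Let $X$ be a Banach space and let $x\in S_X$ be a super $\Delta$-point. Then every relatively weakly open subset $W$ of $B_X$ containing $x$ has Kuratowski measure of non-compactness $\alpha(W)=2$. More precisely, for every such $W$ and every $\varepsilon>0$ there is a sequence $(x_n)\subseteq W$ with $\|x_i-x_j\|>2-\varepsilon$ for all $i\neq j$.
   Context: The Kuratowski measure of non-compactness $\alpha(A)$ of a non-empty bounded subset $A$ of a metric space is the infimum of all $\varepsilon>0$ such that $A$ can be covered by finitely many sets of diameter at most $\varepsilon$. An element $x\in S_X$ is a super $\Delta$-point if $\sup_{y\in V}\|x-y\|=2$ for every relatively weakly open subset $V$ of $B_X$ containing $x$. *)

theory Defs
  imports "HOL-Analysis.Analysis"
begin

definition weak_topology :: "('a::real_normed_vector) topology" where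
  "weak_topology = topology_generated_by
     {f -` S | (f :: 'a \<Rightarrow> real) S. bounded_linear f \<and> open S}"

definition rel_weakly_open_ball :: "('a::real_normed_vector) set \<Rightarrow> bool" where
  "rel_weakly_open_ball V \<longleftrightarrow> (\<exists>U. openin weak_topology U \<and> V = U \<inter> cball 0 1)"

definition super_delta_point :: "('a::real_normed_vector) \<Rightarrow> bool" where
  "super_delta_point x \<longleftrightarrow> norm x = 1 \<and>
     (\<forall>V. rel_weakly_open_ball V \<and> x \<in> V \<longrightarrow> (SUP y\<in>V. norm (x - y)) = 2)"

definition kuratowski_mnc :: "('a::metric_space) set \<Rightarrow> real" where
  "kuratowski_mnc A = Inf {\<epsilon>. \<epsilon> > 0 \<and> (\<exists>F. finite F \<and> A \<subseteq> \<Union>F \<and>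
        (\<forall>S\<in>F. bounded S \<and> diameter S \<le> \<epsilon>))}"

end

theory Submission
  imports Defs
begin

definition sublin :: "('a::real_vector \<Rightarrow> real) \<Rightarrow> bool" where
  "sublin q \<longleftrightarrow> q 0 = 0 \<and> (\<forall>x y. q (x + y) \<le> q x + q y) \<and>
     (\<forall>c x. c > 0 \<longrightarrow> q (c *\<^sub>R x) = c * q x)"

lemma sublin_add: "sublin q \<Longrightarrow> q (x + y) \<le> q x + q y"
  by (simp add: sublin_def)

lemma sublin_scale: "sublin q \<Longrightarrow> c \<ge> 0 \<Longrightarrow> q (c *\<^sub>R x) = c * q x"
  by (cases "c = 0") (auto simp: sublin_def)

lemma sublin_lower: assumes "sublin q" shows "- q (- z) \<le> q z"
proof -
  have "q (z + - z) \<le> q z + q (-z)" using assms sublin_add by blast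
  then show ?thesis using assms by (simp add: sublin_def)
qed

definition shiftf :: "('a::real_vector \<Rightarrow> real) \<Rightarrow> 'a \<Rightarrow> 'a \<Rightarrow> real" where
  "shiftf q w z = Inf ((\<lambda>t. q (z + t *\<^sub>R w) - t * q w) ` {0..})"

lemma shift_term_lower:
  assumes "sublin q" "t \<ge> 0"
  shows "- q (- z) \<le> q (z + t *\<^sub>R w) - t * q w"
proof -
  have "q (t *\<^sub>R w) = q ((z + t *\<^sub>R w) + - z)" by simp
  also have "\<dots> \<le> q (z + t *\<^sub>R w) + q (- z)" by (rule sublin_add[OF assms(1)])
  finally show ?thesis using sublin_scale[OF assms] by simp
qed

lemma shift_bdd:
  assumes "sublin q"
  shows "bdd_below ((\<lambda>t. q (z + t *\<^sub>R w) - t * q w) ` {0..})"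
  using shift_term_lower[OF assms] by (intro bdd_belowI[where m="- q (- z)"]) auto

lemma shift_le:
  assumes "sublin q" "t \<ge> 0"
  shows "shiftf q w z \<le> q (z + t *\<^sub>R w) - t * q w"
  unfolding shiftf_def using assms(2) by (intro cInf_lower shift_bdd[OF assms(1)]) auto

lemma shift_ge:
  assumes "\<And>t. t \<ge> 0 \<Longrightarrow> m \<le> q (z + t *\<^sub>R w) - t * q w"
  shows "m \<le> shiftf q w z"
  unfolding shiftf_def using assms by (intro cInf_greatest) auto

lemma shift_le_q: "sublin q \<Longrightarrow> shiftf q w z \<le> q z"
  using shift_le[of q 0 w z] by simp

lemma shift_neg: "sublin q \<Longrightarrow> shiftf q w (- w) \<le> - q w"
  using shift_le[of q 1 w "- w"] by (simp add: sublin_def)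

lemma shift_sublin:
  assumes q: "sublin q"
  shows "sublin (shiftf q w)"
  unfolding sublin_def
proof (intro conjI allI impI)
  show "shiftf q w 0 = 0"
  proof (rule antisym)
    show "shiftf q w 0 \<le> 0" using shift_le_q[OF q, of w 0] q by (simp add: sublin_def)
    show "0 \<le> shiftf q w 0"
      by (rule shift_ge) (use shift_term_lower[OF q, of _ 0 w] q in \<open>auto simp: sublin_def\<close>)
  qed
next
  fix x y
  have key: "shiftf q w (x + y) \<le> (q (x + t1 *\<^sub>R w) - t1 * q w) + (q (y + t2 *\<^sub>R w) - t2 * q w)"
    if "t1 \<ge> 0" "t2 \<ge> 0" for t1 t2
  proof -
    have "shiftf q w (x + y) \<le> q (x + y + (t1 + t2) *\<^sub>R w) - (t1 + t2) * q w"
      using shift_le[OF q, of "t1 + t2" w "x + y"] that by simp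
    also have "q (x + y + (t1 + t2) *\<^sub>R w) = q ((x + t1 *\<^sub>R w) + (y + t2 *\<^sub>R w))"
      by (simp add: algebra_simps)
    also have "\<dots> \<le> q (x + t1 *\<^sub>R w) + q (y + t2 *\<^sub>R w)" by (rule sublin_add[OF q])
    finally show ?thesis by (simp add: algebra_simps)
  qed
  have "shiftf q w (x + y) - (q (y + t2 *\<^sub>R w) - t2 * q w) \<le> shiftf q w x" if "t2 \<ge> 0" for t2
    by (rule shift_ge) (use key that in force)
  then have "shiftf q w (x + y) - shiftf q w x \<le> shiftf q w y"
    by (intro shift_ge) force
  then show "shiftf q w (x + y) \<le> shiftf q w x + shiftf q w y" by simp
next
  fix c :: real and x assume c: "c > 0"
  show "shiftf q w (c *\<^sub>R x) = c * shiftf q w x"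
  proof (rule antisym)
    have "shiftf q w (c *\<^sub>R x) / c \<le> shiftf q w x"
    proof (rule shift_ge)
      fix s :: real assume s: "s \<ge> 0"
      have "shiftf q w (c *\<^sub>R x) \<le> q (c *\<^sub>R x + (c * s) *\<^sub>R w) - (c * s) * q w"
        using shift_le[OF q, of "c * s"] c s by simp
      also have "c *\<^sub>R x + (c * s) *\<^sub>R w = c *\<^sub>R (x + s *\<^sub>R w)" by (simp add: algebra_simps)
      also have "q \<dots> = c * q (x + s *\<^sub>R w)" using sublin_scale[OF q] c by simp
      finally show "shiftf q w (c *\<^sub>R x) / c \<le> q (x + s *\<^sub>R w) - s * q w"
        using c by (simp add: field_simps)
    qed
    then show "shiftf q w (c *\<^sub>R x) \<le> c * shiftf q w x" using c by (simp add: field_simps)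
    show "c * shiftf q w x \<le> shiftf q w (c *\<^sub>R x)"
    proof (rule shift_ge)
      fix t :: real assume t: "t \<ge> 0"
      have "c * shiftf q w x \<le> c * (q (x + (t / c) *\<^sub>R w) - (t / c) * q w)"
        using shift_le[OF q, of "t / c" w x] c t by (intro mult_left_mono) auto
      also have "\<dots> = c * q (x + (t / c) *\<^sub>R w) - t * q w"
        using c by (simp add: right_diff_distrib)
      also have "c * q (x + (t / c) *\<^sub>R w) = q (c *\<^sub>R (x + (t / c) *\<^sub>R w))"
        using sublin_scale[OF q, of c] c by simp
      also have "c *\<^sub>R (x + (t / c) *\<^sub>R w) = c *\<^sub>R x + t *\<^sub>R w"
        using c by (simp add: algebra_simps)
      finally show "c * shiftf q w x \<le> q (c *\<^sub>R x + t *\<^sub>R w) - t * q w" .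
    qed
  qed
qed

definition SLA :: "'a::real_normed_vector \<Rightarrow> ('a \<Rightarrow> real) set" where
  "SLA v = {q. sublin q \<and> (\<forall>z. q z \<le> norm z) \<and> q (- v) \<le> - norm v}"

lemma sublin_norm: "sublin (norm :: 'a::real_normed_vector \<Rightarrow> real)"
  unfolding sublin_def by (auto intro: norm_triangle_ineq)

lemma chain_inf:
  fixes C :: "('a::real_normed_vector \<Rightarrow> real) set"
  assumes CA: "C \<subseteq> SLA v" and ne: "C \<noteq> {}"
    and tot: "\<And>a b. a \<in> C \<Longrightarrow> b \<in> C \<Longrightarrow> (\<forall>z. a z \<le> b z) \<or> (\<forall>z. b z \<le> a z)"
  defines "u \<equiv> \<lambda>z. Inf ((\<lambda>q. q z) ` C)"
  shows "u \<in> SLA v" "\<And>q z. q \<in> C \<Longrightarrow> u z \<le> q z"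
proof -
  have sl: "sublin q" if "q \<in> C" for q using CA that by (auto simp: SLA_def)
  have bdd: "bdd_below ((\<lambda>q. q z) ` C)" for z
  proof (rule bdd_belowI[where m="- norm (- z)"])
    fix y assume "y \<in> (\<lambda>q. q z) ` C"
    then obtain q where q: "q \<in> C" "y = q z" by auto
    have "- q (- z) \<le> q z" by (rule sublin_lower[OF sl[OF q(1)]])
    moreover have "q (- z) \<le> norm (- z)" using CA q(1) unfolding SLA_def by blast
    ultimately show "- norm (- z) \<le> y" using q by simp
  qed
  show low: "u z \<le> q z" if "q \<in> C" for q z
    unfolding u_def using that bdd by (intro cInf_lower) auto
  have grt: "m \<le> u z" if "\<And>q. q \<in> C \<Longrightarrow> m \<le> q z" for m z
    unfolding u_def using that ne by (intro cInf_greatest) auto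
  obtain q0 where q0: "q0 \<in> C" using ne by auto
  have "sublin u"
    unfolding sublin_def
  proof (intro conjI allI impI)
    show "u 0 = 0"
      using low[OF q0, of 0] grt[of 0 0] sl q0 by (force simp: sublin_def)
  next
    fix x y
    have key: "u (x + y) \<le> q1 x + q2 y" if "q1 \<in> C" "q2 \<in> C" for q1 q2
    proof (cases "\<forall>z. q1 z \<le> q2 z")
      case True
      have "u (x + y) \<le> q1 (x + y)" using low that by blast
      also have "\<dots> \<le> q1 x + q1 y" using sublin_add sl that by blast
      also have "\<dots> \<le> q1 x + q2 y" using True by simp
      finally show ?thesis .
    next
      case False
      then have T: "\<forall>z. q2 z \<le> q1 z" using tot that by blast
      have "u (x + y) \<le> q2 (x + y)" using low that by blast
      also have "\<dots> \<le> q2 x + q2 y" using sublin_add sl that by blast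
      also have "\<dots> \<le> q1 x + q2 y" using T by simp
      finally show ?thesis .
    qed
    have "u (x + y) - q2 y \<le> u x" if "q2 \<in> C" for q2
      by (rule grt) (use key that in force)
    then have "u (x + y) - u x \<le> u y" by (intro grt) force
    then show "u (x + y) \<le> u x + u y" by simp
  next
    fix c :: real and x assume c: "c > 0"
    show "u (c *\<^sub>R x) = c * u x"
    proof (rule antisym)
      have "u (c *\<^sub>R x) / c \<le> u x"
      proof (rule grt)
        fix q assume q: "q \<in> C"
        have "u (c *\<^sub>R x) \<le> q (c *\<^sub>R x)" using low q by blast
        also have "\<dots> = c * q x" using sublin_scale[OF sl[OF q]] c by simp
        finally show "u (c *\<^sub>R x) / c \<le> q x" using c by (simp add: field_simps)
      qed
      then show "u (c *\<^sub>R x) \<le> c * u x" using c by (simp add: field_simps)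
      show "c * u x \<le> u (c *\<^sub>R x)"
      proof (rule grt)
        fix q assume q: "q \<in> C"
        have "c * u x \<le> c * q x" using low[OF q, of x] c by simp
        also have "\<dots> = q (c *\<^sub>R x)" using sublin_scale[OF sl[OF q]] c by simp
        finally show "c * u x \<le> q (c *\<^sub>R x)" .
      qed
    qed
  qed
  moreover have "u z \<le> norm z" for z
  proof -
    have "q0 z \<le> norm z" using CA q0 unfolding SLA_def by blast
    then show ?thesis using low[OF q0, of z] by linarith
  qed
  moreover have "u (- v) \<le> - norm v"
  proof -
    have "q0 (- v) \<le> - norm v" using CA q0 unfolding SLA_def by blast
    then show ?thesis using low[OF q0, of "- v"] by linarith
  qed
  ultimately show "u \<in> SLA v" by (simp add: SLA_def)
qed

lemma SLA_nonempty: "shiftf norm v \<in> SLA v"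
  unfolding SLA_def
  using shift_sublin[OF sublin_norm] shift_le_q[OF sublin_norm] shift_neg[OF sublin_norm]
  by blast

lemma SLA_minimal:
  fixes v :: "'a::real_normed_vector"
  shows "\<exists>m\<in>SLA v. \<forall>a\<in>SLA v. (\<forall>z. a z \<le> m z) \<longrightarrow> a = m"
proof -
  let ?P = "\<lambda>a b :: 'a \<Rightarrow> real. \<forall>z. b z \<le> a z"
  have po: "partial_order_on (SLA v) (relation_of ?P (SLA v))"
    apply (rule partial_order_on_relation_ofI)
      apply simp
     apply (meson order_trans)
    apply (rule ext)
    apply (meson antisym)
    done
  have "\<exists>u \<in> SLA v. \<forall>a \<in> C. ?P a u" if C: "C \<in> Chains (relation_of ?P (SLA v))" for C
  proof (cases "C = {}")
    case True then show ?thesis using SLA_nonempty by blast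
  next
    case False
    have CA: "C \<subseteq> SLA v" using C unfolding Chains_def relation_of_def by blast
    have tot: "(\<forall>z. a z \<le> b z) \<or> (\<forall>z. b z \<le> a z)" if "a \<in> C" "b \<in> C" for a b
      using C that unfolding Chains_def relation_of_def by blast
    have u1: "(\<lambda>z. INF q\<in>C. q z) \<in> SLA v"
      by (rule chain_inf(1)[OF CA False]) (use tot in blast)
    have u2: "(INF q\<in>C. q z) \<le> a z" if "a \<in> C" for a z
      by (rule chain_inf(2)[OF CA False]) (use tot that in blast)+
    show ?thesis
    proof (rule bexI[OF _ u1], intro ballI allI)
      fix a z assume "a \<in> C" then show "(\<lambda>z. INF q\<in>C. q z) z \<le> a z" using u2 by simp
    qed
  qed
  from predicate_Zorn[OF po this] show ?thesis by blast
qed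

lemma norming_functional:
  fixes v :: "'a::real_normed_vector"
  shows "\<exists>f. bounded_linear f \<and> (\<forall>z. \<bar>f z\<bar> \<le> norm z) \<and> f v = norm v"
proof -
  obtain m where m: "m \<in> SLA v" and min: "\<And>a. a \<in> SLA v \<Longrightarrow> (\<forall>z. a z \<le> m z) \<Longrightarrow> a = m"
    using SLA_minimal by blast
  have sl: "sublin m" and le: "\<And>z. m z \<le> norm z" and mv: "m (- v) \<le> - norm v"
    using m by (auto simp: SLA_def)
  have odd: "m (- w) = - m w" for w
  proof -
    have "shiftf m w \<in> SLA v"
    proof -
      have "shiftf m w z \<le> norm z" for z using shift_le_q[OF sl, of w z] le[of z] by linarith
      moreover have "shiftf m w (- v) \<le> - norm v" using shift_le_q[OF sl, of w "- v"] mv by linarith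
      ultimately show ?thesis unfolding SLA_def using shift_sublin[OF sl] by blast
    qed
    then have "shiftf m w = m" using min shift_le_q[OF sl] by blast
    then have "m (- w) \<le> - m w" using shift_neg[OF sl, of w] by simp
    then show ?thesis using sublin_lower[OF sl, of w] by simp
  qed
  have add: "m (x + y) = m x + m y" for x y
  proof (rule antisym)
    show "m (x + y) \<le> m x + m y" by (rule sublin_add[OF sl])
    have "m (- x + - y) \<le> m (- x) + m (- y)" by (rule sublin_add[OF sl])
    then show "m x + m y \<le> m (x + y)" using odd[of x] odd[of y] odd[of "x + y"] by (simp add: add.commute)
  qed
  have scl: "m (r *\<^sub>R x) = r *\<^sub>R m x" for r x
  proof (cases "r \<ge> 0")
    case True then show ?thesis using sublin_scale[OF sl] by simp
  next
    case False
    have "m (r *\<^sub>R x) = m (- ((- r) *\<^sub>R x))" by simp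
    also have "\<dots> = - m ((- r) *\<^sub>R x)" by (rule odd)
    also have "\<dots> = r * m x" using sublin_scale[OF sl, of "- r"] False by simp
    finally show ?thesis by simp
  qed
  have ab: "\<bar>m z\<bar> \<le> norm z" for z
    using le[of z] le[of "- z"] odd[of z] by (simp add: abs_le_iff)
  have "bounded_linear m"
    by (rule bounded_linear_intro[where K=1]) (use add scl ab in auto)
  moreover have "m v = norm v" using le[of v] mv odd[of v] by simp
  ultimately show ?thesis using ab by blast
qed


primrec iter_list :: "('b list \<Rightarrow> 'b) \<Rightarrow> nat \<Rightarrow> 'b list" where
  "iter_list s 0 = []"
| "iter_list s (Suc n) = iter_list s n @ [s (iter_list s n)]"

lemma iter_list_set: "i < n \<Longrightarrow> s (iter_list s i) \<in> set (iter_list s n)"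
  by (induction n) (auto simp: less_Suc_eq)

lemma weak_open_halfspace:
  assumes "bounded_linear (f :: 'a::real_normed_vector \<Rightarrow> real)"
  shows "openin weak_topology {y. a < f y}"
proof -
  have "{y. a < f y} = f -` {a<..}" by auto
  moreover have "f -` {a<..} \<in> {f -` S |(f :: 'a \<Rightarrow> real) S. bounded_linear f \<and> open S}"
    apply (rule CollectI)
    apply (rule exI[where x=f])
    apply (rule exI[where x="{a<..}"])
    using assms by auto
  ultimately show ?thesis unfolding weak_topology_def
    by (simp add: topology_generated_by_Basis)
qed

lemma weak_open_list:
  fixes fs :: "('a::real_normed_vector \<Rightarrow> real) list"
  assumes "openin weak_topology U" "\<forall>g\<in>set fs. bounded_linear g"
  shows "openin weak_topology (U \<inter> {y. \<forall>g\<in>set fs. a < g y})"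
  using assms(2)
proof (induction fs)
  case Nil then show ?case using assms(1) by simp
next
  case (Cons g fs)
  have "U \<inter> {y. \<forall>h\<in>set (g # fs). a < h y} = (U \<inter> {y. \<forall>h\<in>set fs. a < h y}) \<inter> {y. a < g y}"
    by auto
  then show ?case using Cons weak_open_halfspace[of g a] by (simp add: openin_Int)
qed

lemma step_exists:
  fixes x :: "'a::real_normed_vector"
  assumes sd: "super_delta_point x" and U: "openin weak_topology U"
    and W: "W = U \<inter> cball 0 1" and xW: "x \<in> W" and d: "\<delta> > 0"
    and fs: "\<forall>g\<in>set fs. bounded_linear g \<and> 1 - \<delta> < g x"
  shows "\<exists>y f. y \<in> W \<and> (\<forall>g\<in>set fs. 1 - \<delta> < g y) \<and> bounded_linear f \<and>
     (\<forall>z. \<bar>f z\<bar> \<le> norm z) \<and> 1 - \<delta> < f x \<and> f y < - 1 + \<delta>"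
proof -
  define V where "V = (U \<inter> {y. \<forall>g\<in>set fs. 1 - \<delta> < g y}) \<inter> cball 0 1"
  have "openin weak_topology (U \<inter> {y. \<forall>g\<in>set fs. 1 - \<delta> < g y})"
    using weak_open_list[OF U] fs by blast
  then have rV: "rel_weakly_open_ball V" unfolding rel_weakly_open_ball_def V_def by blast
  have xV: "x \<in> V" using xW fs unfolding V_def W by auto
  have nx: "norm x = 1" and sup: "(SUP y\<in>V. norm (x - y)) = 2"
    using sd rV xV unfolding super_delta_point_def by auto
  obtain y where yV: "y \<in> V" and yfar: "norm (x - y) > 2 - \<delta>"
  proof (rule ccontr)
    assume "\<not> thesis"
    then have "\<forall>y\<in>V. norm (x - y) \<le> 2 - \<delta>" using that by force
    then have "(SUP y\<in>V. norm (x - y)) \<le> 2 - \<delta>" using xV by (intro cSUP_least) auto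
    then show False using sup d by simp
  qed
  obtain f where f: "bounded_linear f" "\<forall>z. \<bar>f z\<bar> \<le> norm z" "f (x - y) = norm (x - y)"
    using norming_functional by blast
  have fd: "f (x - y) = f x - f y" using f(1) by (simp add: linear_simps)
  have "f x \<le> 1" using f(2) nx by (metis abs_le_D1)
  moreover have "norm y \<le> 1" using yV unfolding V_def by simp
  then have "- f y \<le> 1" using f(2) by (metis abs_le_D2 order_trans)
  ultimately have "1 - \<delta> < f x" "f y < - 1 + \<delta>" using yfar f(3) fd by linarith+
  moreover have "y \<in> W" using yV unfolding V_def W by auto
  moreover have "\<forall>g\<in>set fs. 1 - \<delta> < g y" using yV unfolding V_def by auto
  ultimately show ?thesis using f by blast
qed

theorem mainTheorem19:
  fixes x :: "'a::banach" and W :: "'a set"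
  assumes "super_delta_point x"
    and "rel_weakly_open_ball W" and "x \<in> W"
  shows "kuratowski_mnc W = 2 \<and>
    (\<forall>\<epsilon>>0. \<exists>xs :: nat \<Rightarrow> 'a. range xs \<subseteq> W \<and>
        (\<forall>i j. i \<noteq> j \<longrightarrow> norm (xs i - xs j) > 2 - \<epsilon>))"
proof -
  obtain U where U: "openin weak_topology U" and W: "W = U \<inter> cball 0 1"
    using assms(2) unfolding rel_weakly_open_ball_def by blast
  have seq: "\<exists>xs :: nat \<Rightarrow> 'a. range xs \<subseteq> W \<and>
        (\<forall>i j. i \<noteq> j \<longrightarrow> norm (xs i - xs j) > 2 - \<epsilon>)" if e: "\<epsilon> > 0" for \<epsilon>
  proof -
    define \<delta> where "\<delta> = \<epsilon> / 2"
    have d: "\<delta> > 0" using e by (simp add: \<delta>_def)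
    define G where "G = {g :: 'a \<Rightarrow> real. bounded_linear g \<and> (\<forall>z. \<bar>g z\<bar> \<le> norm z) \<and> 1 - \<delta> < g x}"
    define Q where "Q = (\<lambda>fs (p :: 'a \<times> ('a \<Rightarrow> real)). fst p \<in> W \<and>
       (\<forall>g\<in>set fs. 1 - \<delta> < g (fst p)) \<and> snd p \<in> G \<and> snd p (fst p) < - 1 + \<delta>)"
    have ex: "\<exists>p. Q fs p" if "set fs \<subseteq> G" for fs
    proof -
      have "\<forall>g\<in>set fs. bounded_linear g \<and> 1 - \<delta> < g x" using that unfolding G_def by blast
      from step_exists[OF assms(1) U W assms(3) d this] obtain y f where
        "y \<in> W \<and> (\<forall>g\<in>set fs. 1 - \<delta> < g y) \<and> bounded_linear f \<and>
         (\<forall>z. \<bar>f z\<bar> \<le> norm z) \<and> 1 - \<delta> < f x \<and> f y < - 1 + \<delta>" by blast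
      then have "Q fs (y, f)" unfolding Q_def G_def by simp
      then show ?thesis by blast
    qed
    define step where "step fs = (SOME p. Q fs p)" for fs
    have stepQ: "Q fs (step fs)" if "set fs \<subseteq> G" for fs
      unfolding step_def using ex[OF that] by (rule someI_ex)
    define L where "L = iter_list (\<lambda>fs. snd (step fs))"
    have LG: "set (L n) \<subseteq> G" for n
    proof (induction n)
      case 0 then show ?case by (simp add: L_def)
    next
      case (Suc n)
      have "snd (step (L n)) \<in> G" using stepQ[OF Suc] unfolding Q_def by blast
      then show ?case using Suc by (simp add: L_def)
    qed
    define xs where "xs n = fst (step (L n))" for n
    define fn where "fn n = snd (step (L n))" for n
    have Qn: "Q (L n) (step (L n))" for n using stepQ[OF LG] .
    have inW: "range xs \<subseteq> W" using Qn unfolding Q_def xs_def by auto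
    have far: "norm (xs j - xs i) > 2 - \<epsilon>" if ij: "i < j" for i j
    proof -
      have "fn i \<in> set (L j)" unfolding fn_def L_def by (rule iter_list_set[OF ij])
      then have a: "1 - \<delta> < fn i (xs j)" using Qn[of j] unfolding Q_def xs_def by blast
      have b: "fn i (xs i) < - 1 + \<delta>" and fG: "fn i \<in> G"
        using Qn[of i] unfolding Q_def xs_def fn_def by auto
      then have bl: "bounded_linear (fn i)" and ab: "\<bar>fn i (xs j - xs i)\<bar> \<le> norm (xs j - xs i)"
        unfolding G_def by auto
      have "fn i (xs j - xs i) = fn i (xs j) - fn i (xs i)" using bl by (simp add: linear_simps)
      moreover have "fn i (xs j - xs i) \<le> norm (xs j - xs i)" using ab by (meson abs_ge_self order_trans)
      ultimately show ?thesis using a b \<delta>_def by linarith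
    qed
    have "\<forall>i j. i \<noteq> j \<longrightarrow> norm (xs i - xs j) > 2 - \<epsilon>"
    proof (intro allI impI)
      fix i j :: nat assume "i \<noteq> j"
      then consider "i < j" | "j < i" by linarith
      then show "norm (xs i - xs j) > 2 - \<epsilon>"
        using far[of i j] far[of j i] by cases (simp_all add: norm_minus_commute)
    qed
    then show ?thesis using inW by blast
  qed
  define K where "K = {\<epsilon>. \<epsilon> > 0 \<and> (\<exists>F. finite F \<and> W \<subseteq> \<Union>F \<and>
        (\<forall>S\<in>F. bounded S \<and> diameter S \<le> \<epsilon>))}"
  have "W \<subseteq> cball 0 1" unfolding W by blast
  then have bW: "bounded W" using bounded_subset[OF bounded_cball] by blast
  have dW: "diameter W \<le> 2"
  proof (rule diameter_le)
    show "W \<noteq> {} \<or> 0 \<le> (2::real)" by simp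
    fix a b assume "a \<in> W" "b \<in> W"
    then have "norm a \<le> 1" "norm b \<le> 1" unfolding W by auto
    then show "norm (a - b) \<le> 2" using norm_triangle_ineq4[of a b] by linarith
  qed
  have 2: "2 \<in> K" unfolding K_def
  proof (intro CollectI conjI)
    show "(2::real) > 0" by simp
    show "\<exists>F. finite F \<and> W \<subseteq> \<Union>F \<and> (\<forall>S\<in>F. bounded S \<and> diameter S \<le> 2)"
      by (rule exI[where x="{W}"]) (use bW dW in auto)
  qed
  have ge: "2 \<le> e" if "e \<in> K" for e
  proof -
    from that obtain F where F: "finite F" "W \<subseteq> \<Union>F" "\<forall>S\<in>F. bounded S \<and> diameter S \<le> e"
      unfolding K_def by blast
    have near: "2 - \<eta> \<le> e" if eta: "\<eta> > 0" for \<eta>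
    proof -
      obtain xs :: "nat \<Rightarrow> 'a" where xs0: "range xs \<subseteq> W \<and> (\<forall>i j. i \<noteq> j \<longrightarrow> norm (xs i - xs j) > 2 - \<eta>)"
        using seq[OF eta] by (elim exE) (erule that)
      have xs: "range xs \<subseteq> W" "\<forall>i j. i \<noteq> j \<longrightarrow> norm (xs i - xs j) > 2 - \<eta>"
        using xs0 by (rule conjunct1, rule conjunct2)
      define g where "g n = (SOME S. S \<in> F \<and> xs n \<in> S)" for n
      have gF: "g n \<in> F \<and> xs n \<in> g n" for n
      proof -
        have "xs n \<in> W" using xs(1) by (simp add: image_subset_iff)
        then have "xs n \<in> \<Union>F" using F(2) by blast
        then have "\<exists>S. S \<in> F \<and> xs n \<in> S" by blast
        then show ?thesis unfolding g_def by (rule someI_ex)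
      qed
      have "\<not> inj g"
      proof
        assume "inj g"
        have "range g \<subseteq> F" using gF by (simp add: image_subset_iff)
        then have "finite (range g)" using F(1) by (rule finite_subset)
        then have "finite (UNIV :: nat set)" using finite_imageD[of g UNIV] \<open>inj g\<close> by simp
        then show False by simp
      qed
      then obtain i j where ij: "i \<noteq> j" "g i = g j" unfolding inj_def by blast
      have gi: "g i \<in> F" "xs i \<in> g i" using gF[of i] by auto
      have xj: "xs j \<in> g i" using gF[of j] ij(2) by simp
      have "bounded (g i) \<and> diameter (g i) \<le> e" using F(3) gi(1) by (rule bspec)
      then have "dist (xs i) (xs j) \<le> diameter (g i)" "diameter (g i) \<le> e"
        using diameter_bounded_bound[OF _ gi(2) xj] by auto
      moreover have "norm (xs i - xs j) > 2 - \<eta>" using xs(2) ij(1) by blast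
      ultimately show ?thesis unfolding dist_norm by linarith
    qed
    show ?thesis
    proof (rule field_le_epsilon)
      fix \<eta> :: real assume "0 < \<eta>"
      then show "2 \<le> e + \<eta>" using near[of \<eta>] by linarith
    qed
  qed
  have "Inf K = 2"
  proof (rule antisym)
    have bK: "bdd_below K" by (rule bdd_belowI[where m=0]) (simp add: K_def)
    show "Inf K \<le> 2" using cInf_lower[OF 2 bK] .
    have "K \<noteq> {}" using 2 by blast
    then show "2 \<le> Inf K" using ge by (rule cInf_greatest)
  qed
  then have "kuratowski_mnc W = 2" unfolding kuratowski_mnc_def K_def .
  then show ?thesis using seq by blast
qed

end
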